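(* Assume the setting in the context, with a decomposition of $\mathcal X$ over $A$, $g\in\mathcal G_s$ and an integer $T>0$, and assume that $$\operatorname*{argmin}_{u\in\mathcal U} J^*_{t+1}(Ax+Bu)\cap\Big[\bigoplus_{i\in\mathcal I}\mathcal E_i\Big]\neq\emptyset\quad\text{for all }x\in\mathcal X,\ t\in\{0,\dots,T-1\}.$$ Then $J^*_t\in\mathcal G_s$ for every $t\in\{0,1,\dots,T\}$.
   Context: Let $\mathcal F$ be a field and $\mathcal X,\mathcal U$ finite-dimensional vector spaces over $\mathcal F$. Let $A:\mathcal X\to\mathcal X$ and $B:\mathcal U\to\mathcal X$ be linear maps with $B$ injective, and let $g:\mathcal X\to\mathbb R_{\ge0}$ satisfy $g(x)=0\iff x=0$. Standing assumption: all minima appearing below are attained. For the finite-horizon problem $(A,B,g,T)$ associated with the system $x_{t+1}=Ax_t+Bu_t$, the cost-to-go functions are defined by $J^*_T=g$ and $J^*_t(x)=g(x)+\min_{u\in\mathcal U}J^*_{t+1}(Ax+Bu)$ for $t=0,\dots,T-1$. A decomposition of $\mathcal X$ over $A$ is a direct sum $\mathcal X=\mathcal X_1\oplus\cdots\oplus\mathcal X_r$ with $r>1$ and $A\mathcal X_i\subseteq\mathcal X_i$ for all $i\in\mathcal I=\{1,\dots,r\}$; $\rho_i:\mathcal X\to\mathcal X_i$ is the projection along the other summands. $\mathcal G_s$ is the set of $h:\mathcal X\to\mathbb R_{\ge0}$ with $h(x)=\sum_i h(\rho_i(x))$ for all $x$. $\mathcal E_i=\{u\in\mathcal U:Bu\in\mathcal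 X_i\}$. *)

theory Defs
  imports Complex_Main
begin

definition is_components :: "nat \<Rightarrow> (nat \<Rightarrow> 'x::ab_group_add set) \<Rightarrow> 'x \<Rightarrow> (nat \<Rightarrow> 'x) \<Rightarrow> bool" where
  "is_components r Xs x c \<longleftrightarrow>
     (\<forall>i\<in>{1..r}. c i \<in> Xs i) \<and> (\<forall>i. i \<notin> {1..r} \<longrightarrow> c i = 0) \<and> x = (\<Sum>i\<in>{1..r}. c i)"

definition is_decomposition ::
  "('f::field \<Rightarrow> 'x::ab_group_add \<Rightarrow> 'x) \<Rightarrow> ('x \<Rightarrow> 'x) \<Rightarrow> nat \<Rightarrow> (nat \<Rightarrow> 'x set) \<Rightarrow> bool" where
  "is_decomposition sX A r Xs \<longleftrightarrow>
     r > 1 \<and>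
     (\<forall>i\<in>{1..r}. module.subspace sX (Xs i)) \<and>
     (\<forall>x. \<exists>!c. is_components r Xs x c) \<and>
     (\<forall>i\<in>{1..r}. A ` Xs i \<subseteq> Xs i)"

definition proj :: "nat \<Rightarrow> (nat \<Rightarrow> 'x::ab_group_add set) \<Rightarrow> nat \<Rightarrow> 'x \<Rightarrow> 'x" where
  "proj r Xs i x = (THE c. is_components r Xs x c) i"

definition in_Gs :: "nat \<Rightarrow> (nat \<Rightarrow> 'x::ab_group_add set) \<Rightarrow> ('x \<Rightarrow> real) \<Rightarrow> bool" where
  "in_Gs r Xs h \<longleftrightarrow> (\<forall>x. h x \<ge> 0) \<and> (\<forall>x. h x = (\<Sum>i\<in>{1..r}. h (proj r Xs i x)))"

definition Eset :: "('u \<Rightarrow> 'x) \<Rightarrow> (nat \<Rightarrow> 'x set) \<Rightarrow> nat \<Rightarrow> 'u set" where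
  "Eset B Xs i = {u. B u \<in> Xs i}"

text \<open>The sum E_1 + ... + E_r (direct, since B is injective).\<close>
definition Esum :: "nat \<Rightarrow> ('u::ab_group_add \<Rightarrow> 'x) \<Rightarrow> (nat \<Rightarrow> 'x set) \<Rightarrow> 'u set" where
  "Esum r B Xs = {(\<Sum>i\<in>{1..r}. e i) | e. \<forall>i\<in>{1..r}. e i \<in> Eset B Xs i}"

text \<open>The min is written as an infimum;
  it is the minimum whenever the minimum is attained (standing assumption).\<close>
fun ctg :: "('x \<Rightarrow> real) \<Rightarrow> ('x::ab_group_add \<Rightarrow> 'x) \<Rightarrow> ('u \<Rightarrow> 'x) \<Rightarrow> nat \<Rightarrow> 'x \<Rightarrow> real" where
  "ctg g A B 0 x = g x"
| "ctg g A B (Suc k) x = g x + (INF u. ctg g A B k (A x + B u))"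

text \<open>J*_t for horizon T (meaningful for t \<le> T).\<close>
definition Jstar :: "('x \<Rightarrow> real) \<Rightarrow> ('x::ab_group_add \<Rightarrow> 'x) \<Rightarrow> ('u \<Rightarrow> 'x) \<Rightarrow> nat \<Rightarrow> nat \<Rightarrow> 'x \<Rightarrow> real" where
  "Jstar g A B T t = ctg g A B (T - t)"

definition argmin_set :: "('x \<Rightarrow> real) \<Rightarrow> ('x::ab_group_add \<Rightarrow> 'x) \<Rightarrow> ('u \<Rightarrow> 'x) \<Rightarrow> nat \<Rightarrow> nat \<Rightarrow> 'x \<Rightarrow> 'u set" where
  "argmin_set g A B T t x =
     {u. \<forall>v. Jstar g A B T (Suc t) (A x + B u) \<le> Jstar g A B T (Suc t) (A x + B v)}"

end

theory Submission
  imports Defs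
begin

lemma proj_eq:
  assumes "\<forall>x. \<exists>!c. is_components r Xs x c" "is_components r Xs x c"
  shows "proj r Xs i x = c i"
  using assms unfolding proj_def by (metis the1_equality)

lemma proj_comp:
  assumes "\<forall>x. \<exists>!c. is_components r Xs x c"
  shows "is_components r Xs x (\<lambda>i. proj r Xs i x)"
  using assms unfolding proj_def by (metis theI' eta_contract_eq)

lemma proj_self:
  assumes D: "\<forall>x. \<exists>!c. is_components r Xs x c" and Z: "\<forall>j\<in>{1..r}. 0 \<in> Xs j"
    and i: "i \<in> {1..r}" and y: "y \<in> Xs i"
  shows "proj r Xs i y = y"
proof -
  have "is_components r Xs y (\<lambda>j. if j = i then y else 0)"
    unfolding is_components_def using Z i y by (auto simp: sum.delta)
  from proj_eq[OF D this] show ?thesis by simp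
qed

lemma proj_split:
  assumes D: "\<forall>x. \<exists>!c. is_components r Xs x c"
    and M: "module sX" and Sub: "\<forall>i\<in>{1..r}. module.subspace sX (Xs i)"
    and aA: "additive A" and aB: "additive B"
    and Ainv: "\<forall>i\<in>{1..r}. A ` Xs i \<subseteq> Xs i"
    and e: "\<forall>j\<in>{1..r}. B (e j) \<in> Xs j"
    and j: "j \<in> {1..r}"
  shows "proj r Xs j (A z + B (\<Sum>j\<in>{1..r}. e j)) = A (proj r Xs j z) + B (e j)"
proof -
  let ?c = "\<lambda>j. if j \<in> {1..r} then A (proj r Xs j z) + B (e j) else 0"
  have pc: "is_components r Xs z (\<lambda>i. proj r Xs i z)" by (rule proj_comp[OF D])
  have "is_components r Xs (A z + B (\<Sum>j\<in>{1..r}. e j)) ?c"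
    unfolding is_components_def
  proof (intro conjI ballI allI impI)
    fix i assume i: "i \<in> {1..r}"
    have "proj r Xs i z \<in> Xs i" using pc i unfolding is_components_def by blast
    hence "A (proj r Xs i z) \<in> Xs i" using Ainv i by blast
    then show "?c i \<in> Xs i" using i e Sub module.subspace_add[OF M] by auto
  next
    fix i assume "i \<notin> {1..r}" then show "?c i = 0" by (simp only: if_False)
  next
    have "z = (\<Sum>i\<in>{1..r}. proj r Xs i z)" using pc unfolding is_components_def by blast
    hence "A z + B (\<Sum>j\<in>{1..r}. e j) = (\<Sum>i\<in>{1..r}. A (proj r Xs i z)) + (\<Sum>j\<in>{1..r}. B (e j))"
      using additive.sum[OF aA] additive.sum[OF aB] by metis
    also have "\<dots> = (\<Sum>i\<in>{1..r}. ?c i)" by (simp add: sum.distrib)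
    finally show "A z + B (\<Sum>j\<in>{1..r}. e j) = (\<Sum>i\<in>{1..r}. ?c i)" .
  qed
  from proj_eq[OF D this] j show ?thesis by simp
qed

theorem proposition2:
  fixes sX :: "'f::field \<Rightarrow> 'x::ab_group_add \<Rightarrow> 'x"
    and sU :: "'f \<Rightarrow> 'u::ab_group_add \<Rightarrow> 'u"
    and BasX :: "'x set" and BasU :: "'u set"
    and A :: "'x \<Rightarrow> 'x" and B :: "'u \<Rightarrow> 'x"
    and g :: "'x \<Rightarrow> real" and r T :: nat and Xs :: "nat \<Rightarrow> 'x set"
  assumes "finite_dimensional_vector_space sX BasX"
    and "finite_dimensional_vector_space sU BasU"
    and "Vector_Spaces.linear sX sX A" and "Vector_Spaces.linear sU sX B" and "inj B"
    and "\<forall>x. g x \<ge> 0" and "\<forall>x. g x = 0 \<longleftrightarrow> x = 0"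
    and "\<forall>t<T. \<forall>x. \<exists>u. \<forall>v. Jstar g A B T (Suc t) (A x + B u) \<le> Jstar g A B T (Suc t) (A x + B v)"
    and "is_decomposition sX A r Xs"
    and "in_Gs r Xs g"
    and "T > 0"
    and "\<forall>x. \<forall>t<T. argmin_set g A B T t x \<inter> Esum r B Xs \<noteq> {}"
  shows "\<forall>t\<le>T. in_Gs r Xs (Jstar g A B T t)"
proof -
  have M: "module sX" using assms(1)
    by (simp add: finite_dimensional_vector_space_def module_iff_vector_space)
  have aA: "additive A" using assms(3)
    by (intro additive.intro) (metis module_hom.add module_hom_iff_linear)
  have aB: "additive B" using assms(4)
    by (intro additive.intro) (metis module_hom.add module_hom_iff_linear)
  have D: "\<forall>x. \<exists>!c. is_components r Xs x c" and Sub: "\<forall>i\<in>{1..r}. module.subspace sX (Xs i)"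
    and Ainv: "\<forall>i\<in>{1..r}. A ` Xs i \<subseteq> Xs i"
    using assms(9) unfolding is_decomposition_def by auto
  have Z: "\<forall>j\<in>{1..r}. 0 \<in> Xs j" using Sub module.subspace_0[OF M] by blast
  have pin: "\<And>i x. i \<in> {1..r} \<Longrightarrow> proj r Xs i x \<in> Xs i"
    using proj_comp[OF D] unfolding is_components_def by blast
  have main: "k \<le> T \<Longrightarrow> in_Gs r Xs (ctg g A B k)" for k
  proof (induction k)
    case 0 then show ?case using assms(10) by simp
  next
    case (Suc k)
    let ?J = "ctg g A B k"
    have IH: "in_Gs r Xs ?J" using Suc by simp
    have Jnn: "\<And>x. ?J x \<ge> 0" using IH unfolding in_Gs_def by blast
    have Jsum: "\<And>x. ?J x = (\<Sum>i\<in>{1..r}. ?J (proj r Xs i x))" using IH unfolding in_Gs_def by blast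
    define m where "m x = (INF u. ?J (A x + B u))" for x
    have bdd: "bdd_below (range (\<lambda>u. ?J (A x + B u)))" for x
      using Jnn by (intro bdd_belowI[of _ 0]) auto
    have mle: "m x \<le> ?J (A x + B u)" for x u
      unfolding m_def by (rule cINF_lower[OF bdd]) simp
    have mnn: "m x \<ge> 0" for x
      unfolding m_def using Jnn by (intro cINF_greatest) auto
    have meq: "m x = ?J (A x + B u)" if "\<forall>v. ?J (A x + B u) \<le> ?J (A x + B v)" for x u
      using mle[of x u] that unfolding m_def by (intro antisym cINF_greatest) auto
    have tlt: "T - Suc k < T" using Suc.prems by simp
    have JS: "Jstar g A B T (Suc (T - Suc k)) = ?J"
      unfolding Jstar_def using Suc.prems by (simp add: Suc_diff_Suc)
    have opt: "\<exists>e. (\<forall>j\<in>{1..r}. B (e j) \<in> Xs j) \<and>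
        (\<forall>v. ?J (A x + B (\<Sum>j\<in>{1..r}. e j)) \<le> ?J (A x + B v))" for x
    proof -
      from assms(12) tlt obtain u where "u \<in> argmin_set g A B T (T - Suc k) x" "u \<in> Esum r B Xs"
        by blast
      then show ?thesis unfolding argmin_set_def JS Esum_def Eset_def by auto
    qed
    have decomp: "?J (A z + B (\<Sum>j\<in>{1..r}. e j)) = (\<Sum>j\<in>{1..r}. ?J (A (proj r Xs j z) + B (e j)))"
      if "\<forall>j\<in>{1..r}. B (e j) \<in> Xs j" for z e
      using Jsum proj_split[OF D M Sub aA aB Ainv that] by (metis (no_types, lifting) sum.cong)
    have msum: "m x = (\<Sum>i\<in>{1..r}. m (proj r Xs i x))" for x
    proof (rule antisym)
      obtain e where e: "\<forall>j\<in>{1..r}. B (e j) \<in> Xs j"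
        "\<forall>v. ?J (A x + B (\<Sum>j\<in>{1..r}. e j)) \<le> ?J (A x + B v)" using opt by blast
      have "m x = ?J (A x + B (\<Sum>j\<in>{1..r}. e j))" using meq e(2) by blast
      also have "\<dots> = (\<Sum>j\<in>{1..r}. ?J (A (proj r Xs j x) + B (e j)))" using decomp e(1) by blast
      also have "\<dots> \<ge> (\<Sum>j\<in>{1..r}. m (proj r Xs j x))" by (intro sum_mono mle)
      finally show "(\<Sum>i\<in>{1..r}. m (proj r Xs i x)) \<le> m x" .
    next
      have "\<forall>i. \<exists>w. i \<in> {1..r} \<longrightarrow> B w \<in> Xs i \<and> ?J (A (proj r Xs i x) + B w) \<le> m (proj r Xs i x)"
      proof (intro allI)
        fix i
        show "\<exists>w. i \<in> {1..r} \<longrightarrow> B w \<in> Xs i \<and> ?J (A (proj r Xs i x) + B w) \<le> m (proj r Xs i x)"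
        proof (cases "i \<in> {1..r}")
          case True
          let ?y = "proj r Xs i x"
          obtain e where e: "\<forall>j\<in>{1..r}. B (e j) \<in> Xs j"
            "\<forall>v. ?J (A ?y + B (\<Sum>j\<in>{1..r}. e j)) \<le> ?J (A ?y + B v)" using opt by blast
          have "m ?y = ?J (A ?y + B (\<Sum>j\<in>{1..r}. e j))" using meq e(2) by blast
          also have "\<dots> = (\<Sum>j\<in>{1..r}. ?J (A (proj r Xs j ?y) + B (e j)))" using decomp e(1) by blast
          also have "\<dots> \<ge> ?J (A (proj r Xs i ?y) + B (e i))"
            using True Jnn by (intro member_le_sum) auto
          finally have "?J (A ?y + B (e i)) \<le> m ?y"
            using proj_self[OF D Z True pin[OF True]] by simp
          then show ?thesis using True e(1) by blast
        qed blast
      qed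
      then obtain w where w: "\<And>i. i \<in> {1..r} \<Longrightarrow> B (w i) \<in> Xs i \<and> ?J (A (proj r Xs i x) + B (w i)) \<le> m (proj r Xs i x)"
        by metis
      have "m x \<le> ?J (A x + B (\<Sum>j\<in>{1..r}. w j))" by (rule mle)
      also have "\<dots> = (\<Sum>j\<in>{1..r}. ?J (A (proj r Xs j x) + B (w j)))" using decomp w by blast
      also have "\<dots> \<le> (\<Sum>j\<in>{1..r}. m (proj r Xs j x))" using w by (intro sum_mono) blast
      finally show "m x \<le> (\<Sum>i\<in>{1..r}. m (proj r Xs i x))" .
    qed
    have ctgS: "ctg g A B (Suc k) x = g x + m x" for x by (simp add: m_def)
    have gsum: "g x = (\<Sum>i\<in>{1..r}. g (proj r Xs i x))" for x using assms(10) unfolding in_Gs_def by blast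
    show ?case unfolding in_Gs_def ctgS
    proof (intro conjI allI)
      fix x show "0 \<le> g x + m x" using assms(6) mnn[of x] by simp
    next
      fix x show "g x + m x = (\<Sum>i\<in>{1..r}. g (proj r Xs i x) + m (proj r Xs i x))"
        using gsum[of x] msum[of x] by (simp add: sum.distrib)
    qed
  qed
  show ?thesis unfolding Jstar_def using main by simp
qed

end
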